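(* For terms $\Gamma\vdash s,t:X$ of the language $\mathbf{PSL}$, $s\approx_{\mathbf{PSL}}t$ if and only if $[\![s]\!]\propto[\![t]\!]$, i.e. there is $\lambda>0$ with $[\![s]\!](y|\gamma)=\lambda[\![t]\!](y|\gamma)$ for all $\gamma,y$. That is, $\mathrm{FinProjStoch}$ is fully abstract for $\mathbf{PSL}$.
   Context: $\mathbf{PSL}$ is the following first-order language. Types: $A::=X\mid\mathsf{unit}\mid A\ast A$ where $X$ ranges over finite sets. Terms: $t::=x\mid()\mid(t,t)\mid\pi_i t\mid \underline f(t)\mid\mathrm{let}\ x=t_1\ \mathrm{in}\ t_2$, where $\underline f:A\to B$ ranges over all subprobability kernels between the finite sets interpreting $A$ and $B$ (this includes exact conditioning $(=:=):X\times X\to D_{\le1}(1)$, $(x,y)\mapsto[x=y]$); typing is the usual one ($\Gamma\vdash \underline f(t):B$ if $\Gamma\vdash t:A$; let binds $x$ in $t_2$; $\pi_i$ projects from pairs). Types denote finite sets ($[\![\mathsf{unit}]\!]=\{*\}$, $[\![A\ast B]\!]=[\![A]\!]\times[\![B]\!]$, contexts by products), and a term $\Gamma\vdash t:A$ denotes a subprobability kernel $[\![t]\!](a|\gamma)$: $[\![x]\!](a|\gamma)=[a=\gamma_x]$; $[\![()]\!]( *|\gamma)=1$; $[\![(s,t)]\!]((a,b)|\gamma)=[\![s]\!](a|\gamma)[\![t]\!](b|\gamma)$; $[\![\pi_1t]\!](a|\gamma)=\sum_b[\![t]\!]((a,b)|\gamma)$ (similarly $\pi_2$); $[\![\underline f(t)]\!](b|\gamma)=\sum_a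 f(b|a)[\![t]\!](a|\gamma)$; $[\![\mathrm{let}\ x=s\ \mathrm{in}\ t]\!](b|\gamma)=\sum_a[\![s]\!](a|\gamma)[\![t]\!](b|\gamma,a)$. For a subdistribution $\varphi$ on a finite set, $\mathsf{normalize}(\varphi)=\varphi/Z$ with $Z=\sum_x\varphi(x)$ if $Z\neq0$, and $0$ otherwise. Closed programs $s,t$ are observationally equivalent, $s\approx t$, if $\mathsf{normalize}([\![s]\!])=\mathsf{normalize}([\![t]\!])$. Open terms $s,t$ are straight-line equivalent, $s\approx_{\mathbf{PSL}}t$, if $C[s]\approx C[t]$ for every closed well-typed $\mathbf{PSL}$ context $C[-]$ (a term with a hole, possibly binding the free variables of the hole). *)

theory Defs
  imports Complex_Main
begin

text \<open>Base types: a finite set X is represented (up to bijection) by Fin n, denoting {0..<n}.\<close>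
datatype ty = Fin nat | TUnit | Prod ty ty

datatype val = VBase nat | VUnit | VPair val val

fun den :: "ty \<Rightarrow> val set" where
  "den (Fin n) = VBase ` {..<n}"
| "den TUnit = {VUnit}"
| "den (Prod A B) = {VPair a b | a b. a \<in> den A \<and> b \<in> den B}"

text \<open>Kernels are f :: input \<Rightarrow> output \<Rightarrow> real, i.e. f a b = f(b|a).
  Terms may contain a Hole (used only for contexts).\<close>
datatype tm =
    Var nat
  | TmUnit
  | TmPair tm tm
  | Fst ty tm
  | Snd ty tm
  | Prim ty ty "val \<Rightarrow> val \<Rightarrow> real" tm
  | Let ty tm tm
  | Hole

text \<open>Fst B t, Snd A t: projections of t : A * B.  Prim A B f t: f(t) for a kernel f from A to B.
  Let A t1 t2: let x = t1 in t2, with x : A being de Bruijn index 0 in t2.\<close>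

definition subprob_kernel :: "ty \<Rightarrow> ty \<Rightarrow> (val \<Rightarrow> val \<Rightarrow> real) \<Rightarrow> bool" where
  "subprob_kernel A B f \<longleftrightarrow>
     (\<forall>a\<in>den A. \<forall>b\<in>den B. 0 \<le> f a b) \<and> (\<forall>a\<in>den A. (\<Sum>b\<in>den B. f a b) \<le> 1)"

text \<open>Typing. The parameter H is None for ordinary terms and Some (Gamma, X) for contexts
  whose hole has type Gamma |- - : X.\<close>
inductive has_type :: "(ty list \<times> ty) option \<Rightarrow> ty list \<Rightarrow> tm \<Rightarrow> ty \<Rightarrow> bool" where
  T_Var: "i < length \<Gamma> \<Longrightarrow> has_type H \<Gamma> (Var i) (\<Gamma> ! i)"
| T_Unit: "has_type H \<Gamma> TmUnit TUnit"
| T_Pair: "has_type H \<Gamma> s A \<Longrightarrow> has_type H \<Gamma> t B \<Longrightarrow> has_type H \<Gamma> (TmPair s t) (Prod A B)"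
| T_Fst: "has_type H \<Gamma> t (Prod A B) \<Longrightarrow> has_type H \<Gamma> (Fst B t) A"
| T_Snd: "has_type H \<Gamma> t (Prod A B) \<Longrightarrow> has_type H \<Gamma> (Snd A t) B"
| T_Prim: "subprob_kernel A B f \<Longrightarrow> has_type H \<Gamma> t A \<Longrightarrow> has_type H \<Gamma> (Prim A B f t) B"
| T_Let: "has_type H \<Gamma> t1 A \<Longrightarrow> has_type H (A # \<Gamma>) t2 B \<Longrightarrow> has_type H \<Gamma> (Let A t1 t2) B"
| T_Hole: "has_type (Some (\<Gamma>, A)) \<Gamma> Hole A"

fun holes :: "tm \<Rightarrow> nat" where
  "holes Hole = 1"
| "holes (TmPair s t) = holes s + holes t"
| "holes (Fst B t) = holes t"
| "holes (Snd A t) = holes t"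
| "holes (Prim A B f t) = holes t"
| "holes (Let A s t) = holes s + holes t"
| "holes _ = 0"

text \<open>Plugging (capturing: the enclosing lets bind the free variables of the hole).\<close>
fun plug :: "tm \<Rightarrow> tm \<Rightarrow> tm" where
  "plug Hole s = s"
| "plug (TmPair a b) s = TmPair (plug a s) (plug b s)"
| "plug (Fst B t) s = Fst B (plug t s)"
| "plug (Snd A t) s = Snd A (plug t s)"
| "plug (Prim A B f t) s = Prim A B f (plug t s)"
| "plug (Let A a b) s = Let A (plug a s) (plug b s)"
| "plug t s = t"

section \<open>Semantics: sem t gamma v = [[t]](v|gamma)\<close>

fun sem :: "tm \<Rightarrow> val list \<Rightarrow> val \<Rightarrow> real" where
  "sem (Var i) \<gamma> v = (if v = \<gamma> ! i then 1 else 0)"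
| "sem TmUnit \<gamma> v = (if v = VUnit then 1 else 0)"
| "sem (TmPair s t) \<gamma> v = (case v of VPair a b \<Rightarrow> sem s \<gamma> a * sem t \<gamma> b | _ \<Rightarrow> 0)"
| "sem (Fst B t) \<gamma> a = (\<Sum>b\<in>den B. sem t \<gamma> (VPair a b))"
| "sem (Snd A t) \<gamma> b = (\<Sum>a\<in>den A. sem t \<gamma> (VPair a b))"
| "sem (Prim A B f t) \<gamma> b = (\<Sum>a\<in>den A. f a b * sem t \<gamma> a)"
| "sem (Let A s t) \<gamma> b = (\<Sum>a\<in>den A. sem s \<gamma> a * sem t (a # \<gamma>) b)"
| "sem Hole \<gamma> v = 0"

definition den_ctx :: "ty list \<Rightarrow> val list set" where
  "den_ctx \<Gamma> = {\<gamma>. length \<gamma> = length \<Gamma> \<and> (\<forall>i<length \<Gamma>. \<gamma> ! i \<in> den (\<Gamma> ! i))}"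

definition normalize :: "(val \<Rightarrow> real) \<Rightarrow> val set \<Rightarrow> val \<Rightarrow> real" where
  "normalize \<phi> S x = (let Z = (\<Sum>y\<in>S. \<phi> y) in if Z \<noteq> 0 then \<phi> x / Z else 0)"

definition obs_equiv :: "ty \<Rightarrow> tm \<Rightarrow> tm \<Rightarrow> bool" where
  "obs_equiv A s t \<longleftrightarrow>
     (\<forall>v\<in>den A. normalize (sem s []) (den A) v = normalize (sem t []) (den A) v)"

definition psl_equiv :: "ty list \<Rightarrow> ty \<Rightarrow> tm \<Rightarrow> tm \<Rightarrow> bool" where
  "psl_equiv \<Gamma> X s t \<longleftrightarrow>
     (\<forall>C A. has_type (Some (\<Gamma>, X)) [] C A \<and> holes C = 1 \<longrightarrow> obs_equiv A (plug C s) (plug C t))"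

end

theory Submission
  imports Defs
begin

lemma finite_den: "finite (den A)"
proof (induction A)
  case (Prod A B)
  have "den (Prod A B) = (\<lambda>(a,b). VPair a b) ` (den A \<times> den B)" by auto
  then show ?case using Prod by simp
qed auto

lemma VPair_den: "VPair a b \<in> den (Prod A B) \<longleftrightarrow> a \<in> den A \<and> b \<in> den B"
  by auto

lemma den_ctx_Nil: "den_ctx [] = {[]}"
  by (auto simp: den_ctx_def)

lemma den_ctx_Cons_mem: "a # g \<in> den_ctx (A # G) \<longleftrightarrow> a \<in> den A \<and> g \<in> den_ctx G"
  unfolding den_ctx_def
  by (auto simp: nth_Cons' split: if_splits)

lemma den_ctx_Cons: "den_ctx (A # G) = (\<lambda>(a,g). a # g) ` (den A \<times> den_ctx G)"
proof -
  have "x \<in> den_ctx (A # G) \<Longrightarrow> \<exists>a g. x = a # g" for x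
    by (cases x) (auto simp: den_ctx_def)
  then show ?thesis using den_ctx_Cons_mem by fastforce
qed

lemma finite_den_ctx: "finite (den_ctx G)"
  by (induction G) (auto simp: den_ctx_Nil den_ctx_Cons finite_den)

lemma sum_den_ctx_Cons:
  "(\<Sum>g\<in>den_ctx (A # G). f g) = (\<Sum>g\<in>den_ctx G. \<Sum>a\<in>den A. f (a # g))"
proof -
  have inj: "inj_on (\<lambda>(a,g). a # g) (den A \<times> den_ctx G)"
    by (auto simp: inj_on_def)
  have "(\<Sum>g\<in>den_ctx (A # G). f g) = (\<Sum>(a,g)\<in>den A \<times> den_ctx G. f (a # g))"
    unfolding den_ctx_Cons by (subst sum.reindex[OF inj]) (simp add: case_prod_unfold)
  also have "\<dots> = (\<Sum>a\<in>den A. \<Sum>g\<in>den_ctx G. f (a # g))"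
    by (simp add: sum.cartesian_product)
  also have "\<dots> = (\<Sum>g\<in>den_ctx G. \<Sum>a\<in>den A. f (a # g))"
    by (rule sum.swap)
  finally show ?thesis .
qed

lemma sem_nonneg:
  "has_type H D t A \<Longrightarrow> d \<in> den_ctx D \<Longrightarrow> v \<in> den A \<Longrightarrow> 0 \<le> sem t d v"
proof (induction arbitrary: d v rule: has_type.induct)
  case (T_Pair H \<Gamma> s A t B)
  then show ?case by (auto intro!: mult_nonneg_nonneg)
next
  case (T_Fst H \<Gamma> t A B)
  then show ?case by (auto intro!: sum_nonneg)
next
  case (T_Snd H \<Gamma> t A B)
  then show ?case by (auto intro!: sum_nonneg)
next
  case (T_Prim A B f H \<Gamma> t)
  then show ?case by (auto intro!: sum_nonneg mult_nonneg_nonneg simp: subprob_kernel_def)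
next
  case (T_Let H \<Gamma> t1 A t2 B)
  then show ?case by (auto intro!: sum_nonneg mult_nonneg_nonneg simp: den_ctx_Cons_mem)
qed auto

lemma plug_typed:
  "has_type H D C A \<Longrightarrow> H = Some (G, X) \<Longrightarrow> has_type None G s X \<Longrightarrow> has_type None D (plug C s) A"
  by (induction rule: has_type.induct) (auto intro: has_type.intros)

lemma holes0_plug: "holes C = 0 \<Longrightarrow> plug C s = C"
  by (induction C) auto

lemma plug_prop:
  "has_type H D C A \<Longrightarrow> H = Some (G, X) \<Longrightarrow> holes C = 1 \<Longrightarrow>
   (\<forall>g\<in>den_ctx G. \<forall>y\<in>den X. sem s g y = c * sem t g y) \<Longrightarrow>
   d \<in> den_ctx D \<Longrightarrow> v \<in> den A \<Longrightarrow> sem (plug C s) d v = c * sem (plug C t) d v"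
proof (induction arbitrary: d v rule: has_type.induct)
  case (T_Pair H \<Gamma> s1 A t1 B)
  from T_Pair.prems obtain a b where v: "v = VPair a b" "a \<in> den A" "b \<in> den B" by auto
  show ?case
  proof (cases "holes s1 = 1")
    case True
    then have "holes t1 = 0" using T_Pair.prems by simp
    then show ?thesis using T_Pair True v by (simp add: holes0_plug)
  next
    case False
    then have "holes s1 = 0" "holes t1 = 1" using T_Pair.prems by auto
    then show ?thesis using T_Pair v by (simp add: holes0_plug)
  qed
next
  case (T_Fst H \<Gamma> t1 A B)
  then show ?case by (auto simp: sum_distrib_left intro!: sum.cong)
next
  case (T_Snd H \<Gamma> t1 A B)
  then show ?case by (auto simp: sum_distrib_left intro!: sum.cong)
next
  case (T_Prim A B f H \<Gamma> t1)
  then show ?case by (auto simp: sum_distrib_left intro!: sum.cong)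
next
  case (T_Let H \<Gamma> t1 A t2 B)
  show ?case
  proof (cases "holes t1 = 1")
    case True
    then have "holes t2 = 0" using T_Let.prems by simp
    then show ?thesis using T_Let True by (auto simp: holes0_plug sum_distrib_left intro!: sum.cong)
  next
    case False
    then have "holes t1 = 0" "holes t2 = 1" using T_Let.prems by auto
    then show ?thesis using T_Let by (auto simp: holes0_plug sum_distrib_left den_ctx_Cons_mem intro!: sum.cong)
  qed
qed auto


definition U :: "ty \<Rightarrow> tm" where
  "U A = Prim TUnit A (\<lambda>_ _. inverse (real (card (den A)))) TmUnit"

fun lets :: "ty list \<Rightarrow> tm \<Rightarrow> tm" where
  "lets [] b = b"
| "lets (A # As) b = lets As (Let A (U A) b)"

fun W :: "ty list \<Rightarrow> real" where
  "W [] = 1"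
| "W (A # As) = inverse (real (card (den A))) * W As"

fun encty :: "ty list \<Rightarrow> ty" where
  "encty [] = TUnit"
| "encty (A # As) = Prod A (encty As)"

fun encv :: "val list \<Rightarrow> val" where
  "encv [] = VUnit"
| "encv (a # as) = VPair a (encv as)"

fun tupv :: "ty list \<Rightarrow> nat \<Rightarrow> tm" where
  "tupv [] i = TmUnit"
| "tupv (A # As) i = TmPair (Var i) (tupv As (Suc i))"

lemma U_typed: "has_type H D (U A) A"
  unfolding U_def
proof (rule T_Prim)
  show "subprob_kernel TUnit A (\<lambda>_ _. inverse (real (card (den A))))"
    unfolding subprob_kernel_def
    by (cases "card (den A) = 0") auto
qed (auto intro: has_type.intros)

lemma sem_U: "sem (U A) d a = inverse (real (card (den A)))"
  by (simp add: U_def)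

lemma holes_U: "holes (U A) = 0" by (simp add: U_def)
lemma plug_U: "plug (U A) s = U A" by (simp add: U_def)

lemma lets_typed: "has_type H (As @ D) b B \<Longrightarrow> has_type H D (lets As b) B"
  by (induction As arbitrary: b) (auto intro!: T_Let U_typed)

lemma holes_lets: "holes (lets As b) = holes b"
  by (induction As arbitrary: b) (auto simp: holes_U)

lemma plug_lets: "plug (lets As b) s = lets As (plug b s)"
  by (induction As arbitrary: b) (auto simp: plug_U)

lemma sem_lets: "sem (lets As b) d v = (\<Sum>g\<in>den_ctx As. W As * sem b (g @ d) v)"
proof (induction As arbitrary: b)
  case Nil
  then show ?case by (simp add: den_ctx_Nil)
next
  case (Cons A As)
  have "sem (lets (A # As) b) d v = (\<Sum>g\<in>den_ctx As. W As * (\<Sum>a\<in>den A. inverse (real (card (den A))) * sem b (a # g @ d) v))"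
    using Cons by (simp add: sem_U)
  also have "\<dots> = (\<Sum>g\<in>den_ctx As. \<Sum>a\<in>den A. W (A # As) * sem b ((a # g) @ d) v)"
    by (simp add: sum_distrib_left mult.assoc mult.left_commute)
  also have "\<dots> = (\<Sum>g\<in>den_ctx (A # As). W (A # As) * sem b (g @ d) v)"
    by (rule sum_den_ctx_Cons[symmetric])
  finally show ?case .
qed

lemma W_pos: "den_ctx As \<noteq> {} \<Longrightarrow> W As > 0"
proof (induction As)
  case (Cons A As)
  then have "den A \<noteq> {}" "den_ctx As \<noteq> {}" by (auto simp: den_ctx_Cons)
  then have "card (den A) > 0" using finite_den by (simp add: card_gt_0_iff)
  then show ?case using Cons \<open>den_ctx As \<noteq> {}\<close> by simp
qed simp

lemma tupv_typed: "has_type H (pre @ As @ post) (tupv As (length pre)) (encty As)"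
proof (induction As arbitrary: pre)
  case (Cons A As)
  have "has_type H ((pre @ [A]) @ As @ post) (tupv As (length (pre @ [A]))) (encty As)"
    by (rule Cons)
  moreover have "has_type H (pre @ A # As @ post) (Var (length pre)) A"
    using T_Var[where i="length pre" and \<Gamma>="pre @ A # As @ post" and H=H] by simp
  ultimately show ?case
    by (auto intro!: T_Pair)
qed (auto intro: has_type.intros)

lemma sem_tupv: "length as = length As \<Longrightarrow>
  sem (tupv As (length pre)) (pre @ as @ post) v = (if v = encv as then 1 else 0)"
proof (induction As arbitrary: pre as v)
  case Nil
  then show ?case by simp
next
  case (Cons A As)
  then obtain a as' where as: "as = a # as'" "length as' = length As" by (cases as) auto
  have IH: "sem (tupv As (length (pre @ [a]))) ((pre @ [a]) @ as' @ post) w = (if w = encv as' then 1 else 0)" for w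
    by (rule Cons.IH) (simp add: as)
  show ?case using IH as by (cases v) auto
qed

lemma holes_tupv: "holes (tupv As i) = 0"
  by (induction As arbitrary: i) auto

lemma encv_den: "g \<in> den_ctx G \<Longrightarrow> encv g \<in> den (encty G)"
proof (induction G arbitrary: g)
  case Nil
  then show ?case by (simp add: den_ctx_Nil)
next
  case (Cons A G)
  then show ?case by (cases g) (auto simp: den_ctx_Cons_mem, simp add: den_ctx_def)
qed

lemma encv_inj: "encv a = encv b \<Longrightarrow> a = b"
proof (induction a arbitrary: b)
  case Nil then show ?case by (cases b) auto
next
  case (Cons x a) then show ?case by (cases b) auto
qed


lemma sem_ctx:
  assumes g0: "g0 \<in> den_ctx G"
  shows "sem (plug (lets G (TmPair (tupv G 0) Hole)) s) [] (VPair (encv g0) y) = W G * sem s g0 y"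
proof -
  have tp: "sem (tupv G 0) g w = (if w = encv g then 1 else 0)" if "g \<in> den_ctx G" for g w
    using sem_tupv[of g G "[]" "[]" w] that by (simp add: den_ctx_def)
  have "sem (plug (lets G (TmPair (tupv G 0) Hole)) s) [] (VPair (encv g0) y)
      = (\<Sum>g\<in>den_ctx G. W G * ((if encv g0 = encv g then 1 else 0) * sem s g y))"
    by (simp add: plug_lets holes0_plug holes_tupv sem_lets tp cong: sum.cong)
  also have "\<dots> = (\<Sum>g\<in>den_ctx G. if g = g0 then W G * sem s g y else 0)"
    by (rule sum.cong) (auto dest: encv_inj)
  also have "\<dots> = W G * sem s g0 y"
    using g0 finite_den_ctx by (simp add: sum.delta')
  finally show ?thesis .
qed

theorem proposition6p11:
  fixes \<Gamma> :: "ty list" and n :: nat and s t :: tm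
  assumes "has_type None \<Gamma> s (Fin n)" and "has_type None \<Gamma> t (Fin n)"
  shows "psl_equiv \<Gamma> (Fin n) s t \<longleftrightarrow>
         (\<exists>c::real. c > 0 \<and> ( \<forall>\<gamma>\<in>den_ctx \<Gamma>. \<forall>y\<in>den (Fin n). sem s \<gamma> y = c * sem t \<gamma> y))"
proof
  assume "\<exists>c::real. c > 0 \<and> ( \<forall>\<gamma>\<in>den_ctx \<Gamma>. \<forall>y\<in>den (Fin n). sem s \<gamma> y = c * sem t \<gamma> y)"
  then obtain c where c: "c > 0" and P: "\<forall>\<gamma>\<in>den_ctx \<Gamma>. \<forall>y\<in>den (Fin n). sem s \<gamma> y = c * sem t \<gamma> y"
    by blast
  show "psl_equiv \<Gamma> (Fin n) s t"
    unfolding psl_equiv_def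
  proof (intro allI impI)
    fix C A assume CA: "has_type (Some (\<Gamma>, Fin n)) [] C A \<and> holes C = 1"
    have eq: "sem (plug C s) [] v = c * sem (plug C t) [] v" if "v \<in> den A" for v
      using plug_prop[of "Some (\<Gamma>, Fin n)" "[]" C A \<Gamma> "Fin n" s c t "[]" v] CA P that
      by (simp add: den_ctx_Nil)
    have Z: "(\<Sum>v\<in>den A. sem (plug C s) [] v) = c * (\<Sum>v\<in>den A. sem (plug C t) [] v)"
      by (simp add: eq sum_distrib_left)
    show "obs_equiv A (plug C s) (plug C t)"
      unfolding obs_equiv_def normalize_def Let_def Z
      using c by (auto simp: eq)
  qed
next
  assume E: "psl_equiv \<Gamma> (Fin n) s t"
  show "\<exists>c::real. c > 0 \<and> ( \<forall>\<gamma>\<in>den_ctx \<Gamma>. \<forall>y\<in>den (Fin n). sem s \<gamma> y = c * sem t \<gamma> y)"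
  proof (cases "den_ctx \<Gamma> = {}")
    case True
    then show ?thesis by (intro exI[of _ 1]) simp
  next
    case False
    define C where "C = lets \<Gamma> (TmPair (tupv \<Gamma> 0) Hole)"
    define A where "A = Prod (encty \<Gamma>) (Fin n)"
    have Cty: "has_type (Some (\<Gamma>, Fin n)) [] C A"
      unfolding C_def A_def
      by (rule lets_typed) (auto intro!: T_Pair T_Hole tupv_typed[of _ "[]" \<Gamma> "[]", simplified])
    have Ch: "holes C = 1" by (simp add: C_def holes_lets holes_tupv)
    have obs: "obs_equiv A (plug C s) (plug C t)"
      using E Cty Ch unfolding psl_equiv_def by blast
    define Ps where "Ps = sem (plug C s) []"
    define Pt where "Pt = sem (plug C t) []"
    define Zs where "Zs = (\<Sum>v\<in>den A. Ps v)"
    define Zt where "Zt = (\<Sum>v\<in>den A. Pt v)"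
    have N: "normalize Ps (den A) v = normalize Pt (den A) v" if "v \<in> den A" for v
      using obs that unfolding obs_equiv_def Ps_def Pt_def by blast
    have Psn: "0 \<le> Ps v" if "v \<in> den A" for v
      unfolding Ps_def
      by (rule sem_nonneg[OF plug_typed[OF Cty refl assms(1)]]) (use that in \<open>simp_all add: den_ctx_Nil\<close>)
    have Ptn: "0 \<le> Pt v" if "v \<in> den A" for v
      unfolding Pt_def
      by (rule sem_nonneg[OF plug_typed[OF Cty refl assms(2)]]) (use that in \<open>simp_all add: den_ctx_Nil\<close>)
    have Zsn: "0 \<le> Zs" unfolding Zs_def by (rule sum_nonneg) (rule Psn)
    have Ztn: "0 \<le> Zt" unfolding Zt_def by (rule sum_nonneg) (rule Ptn)
    have Wp: "W \<Gamma> > 0" using W_pos False by blast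
    have memA: "VPair (encv g) y \<in> den A" if "g \<in> den_ctx \<Gamma>" "y \<in> den (Fin n)" for g y
      using encv_den[OF that(1)] that(2) by (simp add: A_def)
    have Ps_eq: "Ps (VPair (encv g) y) = W \<Gamma> * sem s g y" if "g \<in> den_ctx \<Gamma>" for g y
      unfolding Ps_def C_def using sem_ctx[OF that] .
    have Pt_eq: "Pt (VPair (encv g) y) = W \<Gamma> * sem t g y" if "g \<in> den_ctx \<Gamma>" for g y
      unfolding Pt_def C_def using sem_ctx[OF that] .
    have fin: "finite (den A)" by (rule finite_den)
    show ?thesis
    proof (cases "Zs = 0")
      case Zs0: True
      have Ps0: "Ps v = 0" if "v \<in> den A" for v
        using sum_nonneg_eq_0_iff[OF fin, of Ps] Psn Zs0 that unfolding Zs_def by blast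
      have "Zt = 0"
      proof (rule ccontr)
        assume "Zt \<noteq> 0"
        have "Pt v = 0" if "v \<in> den A" for v
          using N[OF that] Ps0[OF that] Zs0 \<open>Zt \<noteq> 0\<close>
          unfolding normalize_def Let_def Zs_def[symmetric] Zt_def[symmetric] by simp
        then have "Zt = 0" unfolding Zt_def by simp
        with \<open>Zt \<noteq> 0\<close> show False by simp
      qed
      then have Pt0: "Pt v = 0" if "v \<in> den A" for v
        using sum_nonneg_eq_0_iff[OF fin, of Pt] Ptn that unfolding Zt_def by blast
      show ?thesis
      proof (intro exI[of _ 1] conjI ballI)
        fix g y assume g: "g \<in> den_ctx \<Gamma>" and y: "y \<in> den (Fin n)"
        have "W \<Gamma> * sem s g y = 0" using Ps0[OF memA[OF g y]] Ps_eq[OF g] by simp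
        moreover have "W \<Gamma> * sem t g y = 0" using Pt0[OF memA[OF g y]] Pt_eq[OF g] by simp
        ultimately show "sem s g y = 1 * sem t g y" using Wp by simp
      qed simp
    next
      case Zs1: False
      have "Zt \<noteq> 0"
      proof
        assume Zt0: "Zt = 0"
        have "Ps v = 0" if "v \<in> den A" for v
          using N[OF that] Zs1 Zt0
          unfolding normalize_def Let_def Zs_def[symmetric] Zt_def[symmetric] by simp
        then have "Zs = 0" unfolding Zs_def by simp
        with Zs1 show False by simp
      qed
      have PsPt: "Ps v = (Zs / Zt) * Pt v" if "v \<in> den A" for v
        using N[OF that] Zs1 \<open>Zt \<noteq> 0\<close>
        unfolding normalize_def Let_def Zs_def[symmetric] Zt_def[symmetric]
        by (simp add: field_simps)
      have cpos: "Zs / Zt > 0" using Zsn Ztn Zs1 \<open>Zt \<noteq> 0\<close> by simp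
      show ?thesis
      proof (intro exI[of _ "Zs / Zt"] conjI ballI cpos)
        fix g y assume g: "g \<in> den_ctx \<Gamma>" and y: "y \<in> den (Fin n)"
        have "W \<Gamma> * sem s g y = (Zs / Zt) * (W \<Gamma> * sem t g y)"
          using PsPt[OF memA[OF g y]] Ps_eq[OF g] Pt_eq[OF g] by simp
        then have "W \<Gamma> * (sem s g y - Zs / Zt * sem t g y) = 0"
          by (simp add: right_diff_distrib mult.left_commute)
        then show "sem s g y = Zs / Zt * sem t g y" using Wp by simp
      qed
    qed
  qed
qed

end
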